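(* Let $N$ be a society, $D$ an $N$-coalition, $\nabla$ an ES basic fusion operator satisfying (ESF-SD), (ESF-P) and (ESF-I), and $w\neq w'$ interpretations. Suppose $E_{w,w'},E_{w'}\in\mathcal E$ satisfy $[\![B(E_{w,w'})]\!]=\{w,w'\}$, $[\![B(E_{w'})]\!]=\{w'\}$, and $D$ is locally decisive for $E_{w,w'}$ against $E_{w'}$. Then for every interpretation $w''\notin\{w,w'\}$ and all $E_{w,w''},E_{w''}\in\mathcal E$ with $[\![B(E_{w,w''})]\!]=\{w,w''\}$ and $[\![B(E_{w''})]\!]=\{w''\}$, $D$ is decisive for $E_{w,w''}$ against $E_{w''}$.
   Context: Setting: epistemic space $(\mathcal E,B,\mathcal L_{\mathcal P})$ ($\mathcal E$ nonempty, $B:\mathcal E\to$ propositional formulas over finite $\mathcal P$, $|\mathcal P|\ge2$, image modulo equivalence exactly the consistent formulas; $[\![\phi]\!]$ models; $\varphi_M$ a formula with models exactly $M$); agents: well-ordered set $\mathcal S$; society: nonempty finite $N\subseteq\mathcal S$; $N$-profile $\Phi:N\to\mathcal E$, $E_i=\Phi(i)$, identified with $E_i$ if $N=\{i\}$; profiles on $\{i_1<\dots<i_n\}$, $\{j_1<\dots<j_m\}$ equivalent if $n=m$ and entries coincide position-wise. ES basic fusion operator: a map $\nabla(\Phi,E)\in\mathcal E$ with (ESF1) $B(\nabla(\Phi,E))\vdash B(E)$; (ESF2) equivalent profiles and $B(E)\equiv B(E')$ give equivalent $B(\nabla)$; (ESF3) if $B(E)\equiv B(E')\wedge B(E'')$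 then $B(\nabla(\Phi,E'))\wedge B(E'')\vdash B(\nabla(\Phi,E))$; (ESF4) if moreover $B(\nabla(\Phi,E'))\wedge B(E'')\nvdash\bot$ then $B(\nabla(\Phi,E))\vdash B(\nabla(\Phi,E'))\wedge B(E'')$. (ESF-SD): for every agent $i$, interpretations $w_1,w_2,w_3$ and $E_{w_1,w_2},E_{w_2,w_3}$ with $[\![B(E_{w_1,w_2})]\!]=\{w_1,w_2\}$, $[\![B(E_{w_2,w_3})]\!]=\{w_2,w_3\}$, there exist $i$-profiles realising each of: (i) $B(\nabla(E_i,E_{w_1,w_2}))\equiv\varphi_{w_1,w_2}$ and $B(\nabla(E_i,E_{w_2,w_3}))\equiv\varphi_{w_2,w_3}$; (ii) $\equiv\varphi_{w_1,w_2}$ and $\equiv\varphi_{w_2}$; (iii) $\equiv\varphi_{w_1}$ and $\equiv\varphi_{w_2,w_3}$; (iv) $\equiv\varphi_{w_1}$ and $\equiv\varphi_{w_2}$. (ESF-P): for every $N$, $N$-profile $\Phi$, $E,E'$: if $\bigwedge_{i\in N}B(\nabla(E_i,E))\nvdash\bot$ and $B(\nabla(E_i,E))\wedge B(E')\vdash\bot$ for all $i\in N$ then $B(\nabla(\Phi,E))\wedge B(E')\vdash\bot$. (ESF-I): for every $N$, $N$-profiles $\Phi,\Phi'$, $E$: if for every $E'$ with $B(E')\vdash B(E)$, $B(\nabla(E_j,E'))\equiv B(\nabla(E'_j,E'))$ for all $j\in N$, then $B(\nabla(\Phi,E))\equiv B(\nabla(\Phi',E))$. An $N$-coalition is a subset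 $D\subseteq N$. $D$ is locally decisive for $E$ against $E'$ if for every $N$-profile $\Phi$ with (i) $B(\nabla(E_i,E))\wedge B(E')\vdash\bot$ for all $i\in D$, (ii) $B(\nabla(E_j,E))\equiv B(E')$ for all $j\in N\setminus D$, (iii) $\bigwedge_{i\in D}B(\nabla(E_i,E))\nvdash\bot$, we have $B(\nabla(\Phi,E))\wedge B(E')\vdash\bot$. $D$ is decisive for $E$ against $E'$ if the same conclusion holds for every $N$-profile satisfying only (i) and (iii). *)

theory Defs
  imports Main
begin

datatype 'p form =
    FVar 'p | FTop | FBot | FNot "'p form" | FAnd "'p form" "'p form"
  | FOr "'p form" "'p form" | FImp "'p form" "'p form"

type_synonym 'p interp = "'p set"

fun sat :: "'p interp \<Rightarrow> 'p form \<Rightarrow> bool" where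
  "sat v (FVar p) = (p \<in> v)"
| "sat v FTop = True"
| "sat v FBot = False"
| "sat v (FNot f) = (\<not> sat v f)"
| "sat v (FAnd f g) = (sat v f \<and> sat v g)"
| "sat v (FOr f g) = (sat v f \<or> sat v g)"
| "sat v (FImp f g) = (sat v f \<longrightarrow> sat v g)"

definition models :: "'p form \<Rightarrow> 'p interp set" where
  "models f = {v. sat v f}"

definition entails :: "'p form \<Rightarrow> 'p form \<Rightarrow> bool" where
  "entails f g \<longleftrightarrow> (\<forall>v. sat v f \<longrightarrow> sat v g)"

definition fequiv :: "'p form \<Rightarrow> 'p form \<Rightarrow> bool" where
  "fequiv f g \<longleftrightarrow> entails f g \<and> entails g f"

definition consistent :: "'p form \<Rightarrow> bool" where
  "consistent f \<longleftrightarrow> \<not> entails f FBot"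

text \<open>The set of epistemic states is the whole type 'e; B maps states to formulas.
  The image of B modulo equivalence is exactly the set of consistent formulas.\<close>
definition epistemic_space :: "('e \<Rightarrow> ('p::finite) form) \<Rightarrow> bool" where
  "epistemic_space B \<longleftrightarrow> card (UNIV :: 'p set) \<ge> 2
     \<and> (\<forall>E. consistent (B E))
     \<and> (\<forall>f. consistent f \<longrightarrow> (\<exists>E. fequiv (B E) f))"

text \<open>Agents form a well-ordered type 'a. A profile is a partial map from agents
  to epistemic states; an N-profile is one whose domain is N.\<close>
definition society :: "'a set \<Rightarrow> bool" where
  "society N \<longleftrightarrow> finite N \<and> N \<noteq> {}"

definition profile_list :: "('a::wellorder \<rightharpoonup> 'e) \<Rightarrow> 'e list" where
  "profile_list \<Phi> = map (\<lambda>i. the (\<Phi> i)) (sorted_list_of_set (dom \<Phi>))"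

definition profile_equiv :: "('a::wellorder \<rightharpoonup> 'e) \<Rightarrow> ('a \<rightharpoonup> 'e) \<Rightarrow> bool" where
  "profile_equiv \<Phi> \<Psi> \<longleftrightarrow> profile_list \<Phi> = profile_list \<Psi>"

definition basic_fusion ::
  "('e \<Rightarrow> 'p form) \<Rightarrow> (('a::wellorder \<rightharpoonup> 'e) \<Rightarrow> 'e \<Rightarrow> 'e) \<Rightarrow> bool" where
  "basic_fusion B nab \<longleftrightarrow>
     (\<forall>\<Phi> E. society (dom \<Phi>) \<longrightarrow> entails (B (nab \<Phi> E)) (B E))
   \<and> (\<forall>\<Phi> \<Psi> E E'. society (dom \<Phi>) \<longrightarrow> society (dom \<Psi>) \<longrightarrow> profile_equiv \<Phi> \<Psi>
        \<longrightarrow> fequiv (B E) (B E') \<longrightarrow> fequiv (B (nab \<Phi> E)) (B (nab \<Psi> E')))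
   \<and> (\<forall>\<Phi> E E' E''. society (dom \<Phi>) \<longrightarrow> fequiv (B E) (FAnd (B E') (B E''))
        \<longrightarrow> entails (FAnd (B (nab \<Phi> E')) (B E'')) (B (nab \<Phi> E)))
   \<and> (\<forall>\<Phi> E E' E''. society (dom \<Phi>) \<longrightarrow> fequiv (B E) (FAnd (B E') (B E''))
        \<longrightarrow> consistent (FAnd (B (nab \<Phi> E')) (B E''))
        \<longrightarrow> entails (B (nab \<Phi> E)) (FAnd (B (nab \<Phi> E')) (B E'')))"

definition ESF_SD ::
  "('e \<Rightarrow> 'p form) \<Rightarrow> (('a::wellorder \<rightharpoonup> 'e) \<Rightarrow> 'e \<Rightarrow> 'e) \<Rightarrow> bool" where
  "ESF_SD B nab \<longleftrightarrow>
     (\<forall>i w1 w2 w3 E12 E23. distinct [w1, w2, w3]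
        \<longrightarrow> models (B E12) = {w1, w2} \<longrightarrow> models (B E23) = {w2, w3} \<longrightarrow>
       (\<exists>Ei. models (B (nab [i \<mapsto> Ei] E12)) = {w1, w2} \<and> models (B (nab [i \<mapsto> Ei] E23)) = {w2, w3})
     \<and> (\<exists>Ei. models (B (nab [i \<mapsto> Ei] E12)) = {w1, w2} \<and> models (B (nab [i \<mapsto> Ei] E23)) = {w2})
     \<and> (\<exists>Ei. models (B (nab [i \<mapsto> Ei] E12)) = {w1} \<and> models (B (nab [i \<mapsto> Ei] E23)) = {w2, w3})
     \<and> (\<exists>Ei. models (B (nab [i \<mapsto> Ei] E12)) = {w1} \<and> models (B (nab [i \<mapsto> Ei] E23)) = {w2}))"

definition indiv_consistent ::
  "('e \<Rightarrow> 'p form) \<Rightarrow> (('a::wellorder \<rightharpoonup> 'e) \<Rightarrow> 'e \<Rightarrow> 'e) \<Rightarrow> 'a set \<Rightarrow> ('a \<rightharpoonup> 'e) \<Rightarrow> 'e \<Rightarrow> bool" where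
  "indiv_consistent B nab D \<Phi> E \<longleftrightarrow>
     (\<exists>v. \<forall>i\<in>D. sat v (B (nab [i \<mapsto> the (\<Phi> i)] E)))"

definition ESF_P ::
  "('e \<Rightarrow> 'p form) \<Rightarrow> (('a::wellorder \<rightharpoonup> 'e) \<Rightarrow> 'e \<Rightarrow> 'e) \<Rightarrow> bool" where
  "ESF_P B nab \<longleftrightarrow>
     (\<forall>\<Phi> E E'. society (dom \<Phi>) \<longrightarrow> indiv_consistent B nab (dom \<Phi>) \<Phi> E
        \<longrightarrow> (\<forall>i\<in>dom \<Phi>. entails (FAnd (B (nab [i \<mapsto> the (\<Phi> i)] E)) (B E')) FBot)
        \<longrightarrow> entails (FAnd (B (nab \<Phi> E)) (B E')) FBot)"

definition ESF_I ::
  "('e \<Rightarrow> 'p form) \<Rightarrow> (('a::wellorder \<rightharpoonup> 'e) \<Rightarrow> 'e \<Rightarrow> 'e) \<Rightarrow> bool" where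
  "ESF_I B nab \<longleftrightarrow>
     (\<forall>\<Phi> \<Psi> E. society (dom \<Phi>) \<longrightarrow> dom \<Psi> = dom \<Phi> \<longrightarrow>
        (\<forall>E'. entails (B E') (B E) \<longrightarrow>
           (\<forall>j\<in>dom \<Phi>. fequiv (B (nab [j \<mapsto> the (\<Phi> j)] E')) (B (nab [j \<mapsto> the (\<Psi> j)] E'))))
        \<longrightarrow> fequiv (B (nab \<Phi> E)) (B (nab \<Psi> E)))"

definition locally_decisive ::
  "('e \<Rightarrow> 'p form) \<Rightarrow> (('a::wellorder \<rightharpoonup> 'e) \<Rightarrow> 'e \<Rightarrow> 'e) \<Rightarrow> 'a set \<Rightarrow> 'a set \<Rightarrow> 'e \<Rightarrow> 'e \<Rightarrow> bool" where
  "locally_decisive B nab N D E E' \<longleftrightarrow>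
     (\<forall>\<Phi>. dom \<Phi> = N \<longrightarrow>
        (\<forall>i\<in>D. entails (FAnd (B (nab [i \<mapsto> the (\<Phi> i)] E)) (B E')) FBot)
        \<longrightarrow> (\<forall>j\<in>N - D. fequiv (B (nab [j \<mapsto> the (\<Phi> j)] E)) (B E'))
        \<longrightarrow> indiv_consistent B nab D \<Phi> E
        \<longrightarrow> entails (FAnd (B (nab \<Phi> E)) (B E')) FBot)"

definition decisive ::
  "('e \<Rightarrow> 'p form) \<Rightarrow> (('a::wellorder \<rightharpoonup> 'e) \<Rightarrow> 'e \<Rightarrow> 'e) \<Rightarrow> 'a set \<Rightarrow> 'a set \<Rightarrow> 'e \<Rightarrow> 'e \<Rightarrow> bool" where
  "decisive B nab N D E E' \<longleftrightarrow>
     (\<forall>\<Phi>. dom \<Phi> = N \<longrightarrow>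
        (\<forall>i\<in>D. entails (FAnd (B (nab [i \<mapsto> the (\<Phi> i)] E)) (B E')) FBot)
        \<longrightarrow> indiv_consistent B nab D \<Phi> E
        \<longrightarrow> entails (FAnd (B (nab \<Phi> E)) (B E')) FBot)"

end

theory Submission
  imports Defs
begin

lemma models_FAnd[simp]: "models (FAnd f g) = models f \<inter> models g"
  by (auto simp: models_def)
lemma entails_models: "entails f g \<longleftrightarrow> models f \<subseteq> models g"
  by (auto simp: entails_def models_def)
lemma models_FBot[simp]: "models FBot = {}"
  by (auto simp: models_def)
lemma fequiv_models: "fequiv f g \<longleftrightarrow> models f = models g"
  by (auto simp: fequiv_def entails_models)
lemma consistent_models: "consistent f \<longleftrightarrow> models f \<noteq> {}"
  by (auto simp: consistent_def entails_models)

definition allvars :: "('p::finite) list" where "allvars = (SOME xs. set xs = UNIV)"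
lemma set_allvars: "set (allvars :: ('p::finite) list) = UNIV"
  unfolding allvars_def by (rule someI_ex[OF finite_list[OF finite_UNIV]])

definition charf :: "('p::finite) set \<Rightarrow> 'p form" where
  "charf v = foldr (\<lambda>p acc. FAnd (if p \<in> v then FVar p else FNot (FVar p)) acc) allvars FTop"

lemma sat_foldr: "sat u (foldr (\<lambda>p acc. FAnd (if p \<in> v then FVar p else FNot (FVar p)) acc) xs FTop)
   \<longleftrightarrow> (\<forall>p\<in>set xs. p \<in> u \<longleftrightarrow> p \<in> v)"
  by (induction xs) auto

lemma sat_charf: "sat u (charf v) \<longleftrightarrow> u = v"
  unfolding charf_def sat_foldr set_allvars by auto

definition disjf :: "('p::finite) set list \<Rightarrow> 'p form" where
  "disjf xs = foldr (\<lambda>v acc. FOr (charf v) acc) xs FBot"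

lemma sat_disjf: "sat u (disjf xs) \<longleftrightarrow> u \<in> set xs"
  unfolding disjf_def by (induction xs) (auto simp: sat_charf)

lemma exists_state:
  fixes B :: "'e \<Rightarrow> ('p::finite) form"
  assumes "epistemic_space B" "M \<noteq> {}"
  shows "\<exists>E. models (B E) = M"
proof -
  have "finite M" by (rule finite_subset[of _ UNIV]) auto
  then obtain xs where xs: "set xs = M" using finite_list by blast
  have mm: "models (disjf xs) = M" using xs by (auto simp: models_def sat_disjf)
  hence "consistent (disjf xs)" using assms(2) by (simp add: consistent_models)
  then obtain E where "fequiv (B E) (disjf xs)" using assms(1) unfolding epistemic_space_def by blast
  thus ?thesis using mm by (auto simp: fequiv_models)
qed

lemma ne: "epistemic_space B \<Longrightarrow> models (B E) \<noteq> {}"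
  unfolding epistemic_space_def by (simp add: consistent_models)

lemma bf1: "basic_fusion B nab \<Longrightarrow> society (dom \<Phi>) \<Longrightarrow> models (B (nab \<Phi> E)) \<subseteq> models (B E)"
  unfolding basic_fusion_def by (simp add: entails_models)

lemma bf2: "basic_fusion B nab \<Longrightarrow> society (dom \<Phi>) \<Longrightarrow> models (B E) = models (B E')
   \<Longrightarrow> models (B (nab \<Phi> E)) = models (B (nab \<Phi> E'))"
  unfolding basic_fusion_def fequiv_models profile_equiv_def by blast

lemma restr:
  assumes "basic_fusion B nab" "society (dom \<Phi>)" "models (B E) \<subseteq> models (B E3)"
    "models (B (nab \<Phi> E3)) \<inter> models (B E) \<noteq> {}"
  shows "models (B (nab \<Phi> E)) = models (B (nab \<Phi> E3)) \<inter> models (B E)"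
proof -
  have eq: "fequiv (B E) (FAnd (B E3) (B E))" using assms(3) by (auto simp: fequiv_models)
  have a: "entails (FAnd (B (nab \<Phi> E3)) (B E)) (B (nab \<Phi> E))"
    using assms(1,2) eq unfolding basic_fusion_def by blast
  have b: "entails (B (nab \<Phi> E)) (FAnd (B (nab \<Phi> E3)) (B E))"
    using assms(1,2,4) eq unfolding basic_fusion_def by (simp add: consistent_models)
  show ?thesis using a b by (auto simp: entails_models)
qed

lemma tri:
  fixes B :: "'e \<Rightarrow> ('p::finite) form"
  assumes es: "epistemic_space B" and bf: "basic_fusion B nab" and soc: "society (dom \<Phi>)"
    and d: "distinct [x,y,z]" and mxy: "models (B Exy) = {x,y}" and myz: "models (B Eyz) = {y,z}"
    and mxz: "models (B Exz) = {x,z}"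
    and rxy: "models (B (nab \<Phi> Exy)) = {x}"
    and ryz: "z \<in> models (B (nab \<Phi> Eyz)) \<Longrightarrow> y \<in> models (B (nab \<Phi> Eyz))"
  shows "models (B (nab \<Phi> Exz)) = {x}"
proof -
  obtain E3 where m3: "models (B E3) = {x,y,z}" using exists_state[OF es, of "{x,y,z}"] by auto
  let ?R = "models (B (nab \<Phi> E3))"
  have sub: "?R \<subseteq> {x,y,z}" using bf1[OF bf soc] m3 by auto
  have nR: "?R \<noteq> {}" using ne[OF es] by blast
  have r: "\<And>E. models (B E) \<subseteq> {x,y,z} \<Longrightarrow> ?R \<inter> models (B E) \<noteq> {} \<Longrightarrow>
       models (B (nab \<Phi> E)) = ?R \<inter> models (B E)"
    using restr[OF bf soc] m3 by simp
  have ny: "y \<notin> ?R"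
  proof
    assume "y \<in> ?R"
    hence "models (B (nab \<Phi> Exy)) = ?R \<inter> {x,y}" using r[of Exy] mxy by auto
    hence "y \<in> models (B (nab \<Phi> Exy))" using \<open>y \<in> ?R\<close> by simp
    thus False using rxy d by simp
  qed
  have nz: "z \<notin> ?R"
  proof
    assume "z \<in> ?R"
    hence e: "models (B (nab \<Phi> Eyz)) = ?R \<inter> {y,z}" using r[of Eyz] myz by auto
    hence "z \<in> models (B (nab \<Phi> Eyz))" using \<open>z \<in> ?R\<close> by simp
    hence "y \<in> models (B (nab \<Phi> Eyz))" by (rule ryz)
    thus False using e ny by simp
  qed
  have "?R = {x}" using sub nR ny nz by auto
  thus ?thesis using r[of Exz] mxz by auto
qed

lemma SD:
  assumes "ESF_SD B nab" "distinct [w1, w2, w3]" "models (B E12) = {w1, w2}" "models (B E23) = {w2, w3}"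
  shows "(\<exists>Ei. models (B (nab [i \<mapsto> Ei] E12)) = {w1, w2} \<and> models (B (nab [i \<mapsto> Ei] E23)) = {w2, w3})
     \<and> (\<exists>Ei. models (B (nab [i \<mapsto> Ei] E12)) = {w1, w2} \<and> models (B (nab [i \<mapsto> Ei] E23)) = {w2})
     \<and> (\<exists>Ei. models (B (nab [i \<mapsto> Ei] E12)) = {w1} \<and> models (B (nab [i \<mapsto> Ei] E23)) = {w2, w3})
     \<and> (\<exists>Ei. models (B (nab [i \<mapsto> Ei] E12)) = {w1} \<and> models (B (nab [i \<mapsto> Ei] E23)) = {w2})"
proof -
  have "\<forall>i w1 w2 w3 E12 E23. distinct [w1, w2, w3]
        \<longrightarrow> models (B E12) = {w1, w2} \<longrightarrow> models (B E23) = {w2, w3} \<longrightarrow>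
       (\<exists>Ei. models (B (nab [i \<mapsto> Ei] E12)) = {w1, w2} \<and> models (B (nab [i \<mapsto> Ei] E23)) = {w2, w3})
     \<and> (\<exists>Ei. models (B (nab [i \<mapsto> Ei] E12)) = {w1, w2} \<and> models (B (nab [i \<mapsto> Ei] E23)) = {w2})
     \<and> (\<exists>Ei. models (B (nab [i \<mapsto> Ei] E12)) = {w1} \<and> models (B (nab [i \<mapsto> Ei] E23)) = {w2, w3})
     \<and> (\<exists>Ei. models (B (nab [i \<mapsto> Ei] E12)) = {w1} \<and> models (B (nab [i \<mapsto> Ei] E23)) = {w2})"
    using assms(1) unfolding ESF_SD_def .
  from spec[OF spec[OF spec[OF spec[OF spec[OF spec[OF this, of i], of w1], of w2], of w3], of E12], of E23]
  show ?thesis using assms(2-4) by (elim impE) 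
qed

lemma soc1: "society (dom [j \<mapsto> e])" by (simp add: society_def)

theorem proposition14:
  fixes B :: "'e \<Rightarrow> ('p::finite) form"
    and nab :: "('a::wellorder \<rightharpoonup> 'e) \<Rightarrow> 'e \<Rightarrow> 'e"
    and N D :: "'a set"
    and w w' :: "'p interp"
    and Eww' Ew' :: 'e
  assumes "epistemic_space B"
    and "society N" and "D \<subseteq> N"
    and "basic_fusion B nab" and "ESF_SD B nab" and "ESF_P B nab" and "ESF_I B nab"
    and "w \<noteq> w'"
    and "models (B Eww') = {w, w'}" and "models (B Ew') = {w'}"
    and "locally_decisive B nab N D Eww' Ew'"
  shows "\<forall>w'' Eww'' Ew''. w'' \<notin> {w, w'}
           \<longrightarrow> models (B Eww'') = {w, w''} \<longrightarrow> models (B Ew'') = {w''}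
           \<longrightarrow> decisive B nab N D Eww'' Ew''"
proof (intro allI impI)
  note es = assms(1) and bf = assms(4)
  fix w'' Eww'' Ew''
  assume h1: "w'' \<notin> {w, w'}" and h2: "models (B Eww'') = {w, w''}" and h3: "models (B Ew'') = {w''}"
  obtain Ew'w'' where h4: "models (B Ew'w'') = {w', w''}" using exists_state[OF es, of "{w',w''}"] by auto
  have d1: "distinct [w, w', w'']" "distinct [w', w, w'']" "distinct [w', w'', w]" using h1 assms(8) by auto
  have m1: "models (B Eww') = {w', w}" "models (B Eww'') = {w'', w}" using assms(9) h2 by auto
  show "decisive B nab N D Eww'' Ew''"
    unfolding decisive_def
  proof (intro allI impI)
    fix \<Phi> :: "'a \<rightharpoonup> 'e"
    assume dP: "dom \<Phi> = N"
      and hD: "\<forall>i\<in>D. entails (FAnd (B (nab [i \<mapsto> the (\<Phi> i)] Eww'')) (B Ew'')) FBot"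
    define R where "R j e E = models (B (nab [j \<mapsto> e] E))" for j e E
    define P where "P j e \<longleftrightarrow> R j e Eww' = (if j \<in> D then {w} else {w'}) \<and> R j e Ew'w'' = {w'}
        \<and> R j e Eww'' = R j (the (\<Phi> j)) Eww''" for j e
    have ex: "\<exists>e. P j e" if jN: "j \<in> N" for j
    proof -
      let ?S = "R j (the (\<Phi> j)) Eww''"
      have Ssub: "?S \<subseteq> {w, w''}" using bf1[OF bf soc1, of j "the (\<Phi> j)" Eww''] h2 unfolding R_def by simp
      have Sne: "?S \<noteq> {}" using ne[OF es] unfolding R_def by simp
      show ?thesis
      proof (cases "j \<in> D")
        case True
        hence "?S \<inter> {w''} = {}" using hD h3 unfolding R_def by (auto simp: entails_models)
        hence S: "?S = {w}" using Ssub Sne by auto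
        obtain e where e: "R j e Eww' = {w}" "R j e Ew'w'' = {w'}"
          using conjunct2[OF conjunct2[OF conjunct2[OF SD[OF assms(5) d1(1) assms(9) h4, of j]]]] unfolding R_def by blast
        have "R j e Eww'' = {w}"
          unfolding R_def by (rule tri[OF es bf soc1 d1(1) assms(9) h4 h2]) (use e d1 in \<open>auto simp: R_def\<close>)+
        thus ?thesis using e S True unfolding P_def by auto
      next
        case False
        have "?S = {w} \<or> ?S = {w''} \<or> ?S = {w, w''}" using Ssub Sne by auto
        moreover
        { assume S: "?S = {w, w''}"
          obtain e where e: "R j e Eww' = {w'}" "R j e Eww'' = {w, w''}"
            using conjunct1[OF conjunct2[OF conjunct2[OF SD[OF assms(5) d1(2) m1(1) h2, of j]]]] unfolding R_def by blast
          have "R j e Ew'w'' = {w'}"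
            unfolding R_def by (rule tri[OF es bf soc1 d1(2) m1(1) h2 h4]) (use e d1 in \<open>auto simp: R_def\<close>)+
          hence ?thesis using e S False unfolding P_def by auto }
        moreover
        { assume S: "?S = {w}"
          obtain e where e: "R j e Eww' = {w'}" "R j e Eww'' = {w}"
            using conjunct2[OF conjunct2[OF conjunct2[OF SD[OF assms(5) d1(2) m1(1) h2, of j]]]] unfolding R_def by blast
          have "R j e Ew'w'' = {w'}"
            unfolding R_def by (rule tri[OF es bf soc1 d1(2) m1(1) h2 h4]) (use e d1 in \<open>auto simp: R_def\<close>)+
          hence ?thesis using e S False unfolding P_def by auto }
        moreover
        { assume S: "?S = {w''}"
          obtain e where e: "R j e Ew'w'' = {w'}" "R j e Eww'' = {w''}"
            using conjunct2[OF conjunct2[OF conjunct2[OF SD[OF assms(5) d1(3) h4 m1(2), of j]]]] unfolding R_def by blast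
          have "R j e Eww' = {w'}"
            unfolding R_def by (rule tri[OF es bf soc1 d1(3) h4 m1(2) m1(1)]) (use e d1 in \<open>auto simp: R_def\<close>)+
          hence ?thesis using e S False unfolding P_def by auto }
        ultimately show ?thesis by blast
      qed
    qed
    define \<Psi> where "\<Psi> = (\<lambda>j. if j \<in> N then Some (SOME e. P j e) else None)"
    have dPsi: "dom \<Psi> = N" unfolding \<Psi>_def by (auto split: if_splits)
    have PPsi: "P j (the (\<Psi> j))" if "j \<in> N" for j
      using someI_ex[OF ex[OF that]] that unfolding \<Psi>_def by simp
    have socN: "society (dom \<Psi>)" using dPsi assms(2) by simp
    have "entails (FAnd (B (nab \<Psi> Eww')) (B Ew')) FBot"
      using assms(11) unfolding locally_decisive_def
    proof (elim allE impE)
      show "dom \<Psi> = N" by (rule dPsi)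
      show "\<forall>i\<in>D. entails (FAnd (B (nab [i \<mapsto> the (\<Psi> i)] Eww')) (B Ew')) FBot"
        using PPsi assms(3,8,10) unfolding P_def R_def by (auto simp: entails_models)
      show "\<forall>j\<in>N - D. fequiv (B (nab [j \<mapsto> the (\<Psi> j)] Eww')) (B Ew')"
        using PPsi assms(10) unfolding P_def R_def by (auto simp: fequiv_models)
      show "indiv_consistent B nab D \<Psi> Eww'"
        unfolding indiv_consistent_def
      proof (intro exI ballI)
        fix i assume "i \<in> D"
        hence "w \<in> R i (the (\<Psi> i)) Eww'" using PPsi assms(3) unfolding P_def by auto
        thus "sat w (B (nab [i \<mapsto> the (\<Psi> i)] Eww'))" unfolding R_def models_def by simp
      qed
    qed
    hence g1: "models (B (nab \<Psi> Eww')) = {w}"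
      using bf1[OF bf socN, of Eww'] ne[OF es, of "nab \<Psi> Eww'"] assms(9,10)
      by (auto simp: entails_models)
    have "entails (FAnd (B (nab \<Psi> Ew'w'')) (B Ew'')) FBot"
      using assms(6) unfolding ESF_P_def
    proof (elim allE impE)
      show "society (dom \<Psi>)" by (rule socN)
      show "indiv_consistent B nab (dom \<Psi>) \<Psi> Ew'w''"
        unfolding indiv_consistent_def
      proof (intro exI ballI)
        fix i assume "i \<in> dom \<Psi>"
        hence "w' \<in> R i (the (\<Psi> i)) Ew'w''" using PPsi dPsi unfolding P_def by auto
        thus "sat w' (B (nab [i \<mapsto> the (\<Psi> i)] Ew'w''))" unfolding R_def models_def by simp
      qed
      show "\<forall>i\<in>dom \<Psi>. entails (FAnd (B (nab [i \<mapsto> the (\<Psi> i)] Ew'w'')) (B Ew'')) FBot"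
        using PPsi dPsi h3 h1 unfolding P_def R_def by (auto simp: entails_models)
    qed
    hence g2: "w'' \<notin> models (B (nab \<Psi> Ew'w''))" using h3 by (auto simp: entails_models)
    have g3: "models (B (nab \<Psi> Eww'')) = {w}"
      using tri[OF es bf socN d1(1) assms(9) h4 h2 g1] g2 by blast
    have "fequiv (B (nab \<Phi> Eww'')) (B (nab \<Psi> Eww''))"
      using assms(7) unfolding ESF_I_def
    proof (elim allE impE)
      show "society (dom \<Phi>)" using dP assms(2) by simp
      show "dom \<Psi> = dom \<Phi>" using dP dPsi by simp
      show "\<forall>E'. entails (B E') (B Eww'') \<longrightarrow>
         (\<forall>j\<in>dom \<Phi>. fequiv (B (nab [j \<mapsto> the (\<Phi> j)] E')) (B (nab [j \<mapsto> the (\<Psi> j)] E')))"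
      proof (intro allI impI ballI)
        fix E' j assume sE: "entails (B E') (B Eww'')" and j: "j \<in> dom \<Phi>"
        have sub: "models (B E') \<subseteq> {w, w''}" using sE h2 by (simp add: entails_models)
        have neE: "models (B E') \<noteq> {}" by (rule ne[OF es])
        have P: "P j (the (\<Psi> j))" using PPsi j dP by simp
        show "fequiv (B (nab [j \<mapsto> the (\<Phi> j)] E')) (B (nab [j \<mapsto> the (\<Psi> j)] E'))"
          unfolding fequiv_models
        proof (cases "models (B E') = {w, w''}")
          case True
          thus "models (B (nab [j \<mapsto> the (\<Phi> j)] E')) = models (B (nab [j \<mapsto> the (\<Psi> j)] E'))"
            using bf2[OF bf soc1, of E' Eww''] h2 P unfolding P_def R_def by metis
        next
          case False
          then obtain a where a: "models (B E') = {a}" using sub neE by blast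
          have "models (B (nab [j \<mapsto> e] E')) = {a}" for e
            using subset_singletonD[OF bf1[OF bf soc1, of j e E', unfolded a]] ne[OF es, of "nab [j \<mapsto> e] E'"] by blast
          thus "models (B (nab [j \<mapsto> the (\<Phi> j)] E')) = models (B (nab [j \<mapsto> the (\<Psi> j)] E'))"
            by simp
        qed
      qed
    qed
    thus "entails (FAnd (B (nab \<Phi> Eww'')) (B Ew'')) FBot"
      using g3 h3 h1 by (auto simp: fequiv_models entails_models)
  qed
qed

end
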